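(* Let $\nu \geq 1$ and $\delta > 0$ be real numbers, let $s \geq 4$ be an even natural number, and let $A$ be a finite non-empty set of real numbers satisfying $E_s(A) = |A|^{2s - \nu}$ and $E_{s/2}(A) \leq |A|^{s - \nu + \delta}$. Then there exists $G \subseteq A^s$ such that \[ |G| > |A|^{s - \delta}/2 \quad \text{and} \quad |\Sigma(G)| \leq 4 |A|^{\nu}, \] where $\Sigma(G) = \{a_1 + \dots + a_s : (a_1, \dots, a_s) \in G\}$.
   Context: For a finite set $X$ of reals and $t \in \mathbb{N}$, $E_t(X) = |\{(x_1,\dots,x_{2t}) \in X^{2t} : x_1 + \dots + x_t = x_{t+1} + \dots + x_{2t}\}|$. *)

theory Defs
  imports "HOL-Analysis.Analysis" "HOL-Library.FuncSet"
begin

definition additive_energy :: "nat \<Rightarrow> real set \<Rightarrow> nat" where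
  "additive_energy t X = card {x \<in> {0..<2*t} \<rightarrow>\<^sub>E X.
      (\<Sum>i<t. x i) = (\<Sum>i\<in>{t..<2*t}. x i)}"

definition tuple_sums :: "nat \<Rightarrow> (nat \<Rightarrow> real) set \<Rightarrow> real set" where
  "tuple_sums s G = (\<lambda>a. \<Sum>i<s. a i) ` G"

end

theory Submission
  imports Defs
begin

definition cnt :: "'a set \<Rightarrow> ('a \<Rightarrow> real) \<Rightarrow> real \<Rightarrow> nat" where
  "cnt X f y = card {a\<in>X. f a = y}"

lemma fiber_sum:
  assumes "finite X" "finite W" "f ` X \<subseteq> W"
  shows "(\<Sum>a\<in>X. h (f a)) = (\<Sum>y\<in>W. real (cnt X f y) * h y)"
proof -
  have "(\<Sum>a\<in>X. h (f a)) = (\<Sum>y\<in>W. \<Sum>a\<in>{a\<in>X. f a = y}. h (f a))"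
    using sum.group[OF assms, of "\<lambda>a. h (f a)"] by simp
  also have "\<dots> = (\<Sum>y\<in>W. real (cnt X f y) * h y)"
    by (rule sum.cong) (auto simp: cnt_def)
  finally show ?thesis .
qed

lemma pairs_eq:
  assumes "finite X"
  shows "card {p\<in>X\<times>X. f (fst p) = f (snd p)} = (\<Sum>a\<in>X. cnt X f (f a))"
proof -
  have "{p\<in>X\<times>X. f (fst p) = f (snd p)} = Sigma X (\<lambda>a. {b\<in>X. f b = f a})" by auto
  then show ?thesis using assms by (simp add: cnt_def)
qed

lemma pairs_sum:
  assumes "finite X"
  shows "card {p\<in>X\<times>X. f (fst p) + f (snd p) = x} = (\<Sum>a\<in>X. cnt X f (x - f a))"
proof -
  have "{p\<in>X\<times>X. f (fst p) + f (snd p) = x} = Sigma X (\<lambda>a. {b\<in>X. f b = x - f a})" by auto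
  then show ?thesis using assms by (simp add: cnt_def)
qed

lemma cs_bound:
  assumes "finite X"
  shows "real (\<Sum>a\<in>X. cnt X f (x - f a)) \<le> real (\<Sum>a\<in>X. cnt X f (f a))"
proof -
  define V where "V = f ` X"
  define W where "W = V \<union> (\<lambda>y. x - y) ` V"
  have fW: "finite W" using assms by (simp add: V_def W_def)
  have sub: "f ` X \<subseteq> W" by (auto simp: V_def W_def)
  let ?c = "\<lambda>y. real (cnt X f y)"
  have e1: "real (\<Sum>a\<in>X. cnt X f (x - f a)) = (\<Sum>y\<in>W. ?c y * ?c (x - y))"
    using fiber_sum[OF assms fW sub, of "\<lambda>y. ?c (x - y)"] by simp
  have e2: "real (\<Sum>a\<in>X. cnt X f (f a)) = (\<Sum>y\<in>W. ?c y * ?c y)"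
    using fiber_sum[OF assms fW sub, of "\<lambda>y. ?c y"] by simp
  have bij: "bij_betw (\<lambda>y. x - y) W W"
    by (rule bij_betw_byWitness[where f'="\<lambda>y. x - y"]) (auto simp: W_def V_def image_iff)
  have e3: "(\<Sum>y\<in>W. ?c (x - y) * ?c (x - y)) = (\<Sum>y\<in>W. ?c y * ?c y)"
    using sum.reindex_bij_betw[OF bij, of "\<lambda>y. ?c y * ?c y"] by simp
  have "(\<Sum>y\<in>W. ?c y * ?c (x - y)) \<le> (\<Sum>y\<in>W. (?c y * ?c y + ?c (x - y) * ?c (x - y)) / 2)"
  proof (rule sum_mono)
    fix y
    have "0 \<le> (?c y - ?c (x - y))^2" by simp
    then show "?c y * ?c (x - y) \<le> (?c y * ?c y + ?c (x - y) * ?c (x - y)) / 2"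
      by (simp add: power2_eq_square algebra_simps)
  qed
  also have "\<dots> = (\<Sum>y\<in>W. ?c y * ?c y)"
    using e3 by (simp add: sum_divide_distrib[symmetric] sum.distrib)
  finally show ?thesis using e1 e2 by simp
qed


lemma split_card:
  fixes A :: "real set" and Q :: "real \<Rightarrow> real \<Rightarrow> bool" and t :: nat
  shows "card {c \<in> {0..<2*t} \<rightarrow>\<^sub>E A. Q (\<Sum>i<t. c i) (\<Sum>i\<in>{t..<2*t}. c i)}
       = card {p \<in> ({0..<t} \<rightarrow>\<^sub>E A) \<times> ({0..<t} \<rightarrow>\<^sub>E A). Q (\<Sum>i<t. fst p i) (\<Sum>i<t. snd p i)}"
proof -
  define sp where "sp = (\<lambda>c::nat\<Rightarrow>real. (restrict c {0..<t}, \<lambda>i\<in>{0..<t}. c (i + t)))"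
  define jn where "jn = (\<lambda>p::(nat\<Rightarrow>real)\<times>(nat\<Rightarrow>real). \<lambda>i. if i < t then fst p i else if i < 2*t then snd p (i - t) else undefined)"
  have shift: "(\<Sum>i\<in>{t..<2*t}. c i) = (\<Sum>i<t. c (i + t))" for c :: "nat \<Rightarrow> real"
  proof -
    have "(\<Sum>i\<in>{0+t..<t+t}. c i) = (\<Sum>i\<in>{0..<t}. c (i + t))"
      by (rule sum.shift_bounds_nat_ivl)
    then show ?thesis by (simp add: mult_2 lessThan_atLeast0)
  qed
  have "bij_betw sp {c \<in> {0..<2*t} \<rightarrow>\<^sub>E A. Q (\<Sum>i<t. c i) (\<Sum>i\<in>{t..<2*t}. c i)}
       {p \<in> ({0..<t} \<rightarrow>\<^sub>E A) \<times> ({0..<t} \<rightarrow>\<^sub>E A). Q (\<Sum>i<t. fst p i) (\<Sum>i<t. snd p i)}"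
  proof (rule bij_betw_byWitness[where f'=jn])
    show "\<forall>a\<in>{c \<in> {0..<2*t} \<rightarrow>\<^sub>E A. Q (\<Sum>i<t. c i) (\<Sum>i\<in>{t..<2*t}. c i)}. jn (sp a) = a"
      by (auto simp: sp_def jn_def PiE_def extensional_def fun_eq_iff)
    show "\<forall>a'\<in>{p \<in> ({0..<t} \<rightarrow>\<^sub>E A) \<times> ({0..<t} \<rightarrow>\<^sub>E A). Q (\<Sum>i<t. fst p i) (\<Sum>i<t. snd p i)}. sp (jn a') = a'"
      by (auto simp: sp_def jn_def PiE_def extensional_def fun_eq_iff)
    show "sp ` {c \<in> {0..<2*t} \<rightarrow>\<^sub>E A. Q (\<Sum>i<t. c i) (\<Sum>i\<in>{t..<2*t}. c i)}
       \<subseteq> {p \<in> ({0..<t} \<rightarrow>\<^sub>E A) \<times> ({0..<t} \<rightarrow>\<^sub>E A). Q (\<Sum>i<t. fst p i) (\<Sum>i<t. snd p i)}"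
      by (auto simp: sp_def shift PiE_def extensional_def)
    show "jn ` {p \<in> ({0..<t} \<rightarrow>\<^sub>E A) \<times> ({0..<t} \<rightarrow>\<^sub>E A). Q (\<Sum>i<t. fst p i) (\<Sum>i<t. snd p i)}
       \<subseteq> {c \<in> {0..<2*t} \<rightarrow>\<^sub>E A. Q (\<Sum>i<t. c i) (\<Sum>i\<in>{t..<2*t}. c i)}"
    proof
      fix c assume "c \<in> jn ` {p \<in> ({0..<t} \<rightarrow>\<^sub>E A) \<times> ({0..<t} \<rightarrow>\<^sub>E A). Q (\<Sum>i<t. fst p i) (\<Sum>i<t. snd p i)}"
      then obtain a b where ab: "a \<in> {0..<t} \<rightarrow>\<^sub>E A" "b \<in> {0..<t} \<rightarrow>\<^sub>E A" "Q (\<Sum>i<t. a i) (\<Sum>i<t. b i)" and c: "c = jn (a, b)"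
        by auto
      have "c \<in> {0..<2*t} \<rightarrow>\<^sub>E A" using ab(1,2) by (auto simp: c jn_def PiE_def extensional_def Pi_def)
      moreover have "(\<Sum>i<t. c i) = (\<Sum>i<t. a i)" by (simp add: c jn_def)
      moreover have "(\<Sum>i<t. c (i + t)) = (\<Sum>i<t. b i)" by (simp add: c jn_def)
      ultimately show "c \<in> {c \<in> {0..<2*t} \<rightarrow>\<^sub>E A. Q (\<Sum>i<t. c i) (\<Sum>i\<in>{t..<2*t}. c i)}"
        using ab(3) by (simp add: shift)
    qed
  qed
  then show ?thesis by (rule bij_betw_same_card)
qed


theorem lemma8p1:
  fixes \<nu> \<delta> :: real and s :: nat and A :: "real set"
  assumes "\<nu> \<ge> 1" and "\<delta> > 0"
    and "s \<ge> 4" and "even s"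
    and "finite A" and "A \<noteq> {}"
    and "real (additive_energy s A) = real (card A) powr (2 * real s - \<nu>)"
    and "real (additive_energy (s div 2) A) \<le> real (card A) powr (real s - \<nu> + \<delta>)"
  shows "\<exists>G \<subseteq> {0..<s} \<rightarrow>\<^sub>E A.
           real (card G) > real (card A) powr (real s - \<delta>) / 2 \<and>
           real (card (tuple_sums s G)) \<le> 4 * real (card A) powr \<nu>"
proof -
  define k where "k = s div 2"
  have s2: "s = 2 * k" using assms(4) by (simp add: k_def)
  define N where "N = real (card A)"
  have N1: "N \<ge> 1" using assms(5,6) by (simp add: N_def Suc_le_eq card_gt_0_iff)
  hence Npos: "N > 0" by simp
  define X where "X = {0..<s} \<rightarrow>\<^sub>E A"
  define Xk where "Xk = {0..<k} \<rightarrow>\<^sub>E A"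
  define F where "F = (\<lambda>a::nat\<Rightarrow>real. \<Sum>i<s. a i)"
  define Fk where "Fk = (\<lambda>a::nat\<Rightarrow>real. \<Sum>i<k. a i)"
  have finX: "finite X" using assms(5) by (simp add: X_def finite_PiE)
  have finXk: "finite Xk" using assms(5) by (simp add: Xk_def finite_PiE)
  have cardX: "real (card X) = N powr real s"
    using Npos by (simp add: X_def card_PiE N_def powr_realpow)
  define M where "M = real (additive_energy k A)"
  have EkM: "M = real (\<Sum>a\<in>Xk. cnt Xk Fk (Fk a))"
  proof -
    have "additive_energy k A = card {p \<in> Xk \<times> Xk. Fk (fst p) = Fk (snd p)}"
      unfolding additive_energy_def Xk_def Fk_def using split_card[where Q="(=)" and t=k and A=A] by simp
    then show ?thesis using pairs_eq[OF finXk] by (simp add: M_def)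
  qed
  have Es: "real (additive_energy s A) = real (\<Sum>a\<in>X. cnt X F (F a))"
  proof -
    have "additive_energy s A = card {p \<in> X \<times> X. F (fst p) = F (snd p)}"
      unfolding additive_energy_def X_def F_def using split_card[where Q="(=)" and t=s and A=A] by simp
    then show ?thesis using pairs_eq[OF finX] by simp
  qed
  have cntM: "real (cnt X F x) \<le> M" for x
  proof -
    have "cnt X F x = card {c \<in> {0..<2*k} \<rightarrow>\<^sub>E A. (\<Sum>i<k. c i) + (\<Sum>i\<in>{k..<2*k}. c i) = x}"
    proof -
      have "(\<Sum>i<2*k. c i) = (\<Sum>i<k. c i) + (\<Sum>i\<in>{k..<2*k}. c i)" for c :: "nat \<Rightarrow> real"
        using sum.atLeastLessThan_concat[of 0 k "2*k" c] by (simp add: lessThan_atLeast0)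
      then show ?thesis by (simp add: cnt_def X_def F_def s2)
    qed
    also have "\<dots> = card {p \<in> Xk \<times> Xk. Fk (fst p) + Fk (snd p) = x}"
      using split_card[where Q="\<lambda>u v. u + v = x" and t=k and A=A] by (simp add: Xk_def Fk_def)
    also have "\<dots> = (\<Sum>a\<in>Xk. cnt Xk Fk (x - Fk a))" by (rule pairs_sum[OF finXk])
    finally show ?thesis using cs_bound[OF finXk, of Fk x] EkM by simp
  qed
  define T where "T = N powr (real s - \<nu>) / 4"
  have Tpos: "T > 0" using Npos by (simp add: T_def)
  define G where "G = {a\<in>X. real (cnt X F (F a)) \<ge> T}"
  have GX: "G \<subseteq> X" by (auto simp: G_def)
  have finG: "finite G" using GX finX finite_subset by blast
  have "N powr (2 * real s - \<nu>) = (\<Sum>a\<in>X. real (cnt X F (F a)))" using Es assms(7) by (simp add: N_def)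
  also have "\<dots> = (\<Sum>a\<in>G. real (cnt X F (F a))) + (\<Sum>a\<in>X-G. real (cnt X F (F a)))"
    using sum.subset_diff[OF GX finX] by (simp add: add.commute)
  also have "\<dots> \<le> (\<Sum>a\<in>G. M) + (\<Sum>a\<in>X-G. T)"
    by (intro add_mono sum_mono) (auto simp: G_def cntM)
  also have "\<dots> \<le> real (card G) * M + real (card X) * T"
    using Tpos card_mono[OF finX, of "X - G"] by simp
  finally have ineq: "N powr (2 * real s - \<nu>) \<le> real (card G) * M + N powr real s * T"
    using cardX by simp
  have "N powr real s * T = N powr (2 * real s - \<nu>) / 4"
    by (simp add: T_def powr_add[symmetric])
  with ineq have "3/4 * N powr (2 * real s - \<nu>) \<le> real (card G) * M" by simp
  also have "\<dots> \<le> real (card G) * N powr (real s - \<nu> + \<delta>)"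
    using assms(8) by (simp add: M_def k_def N_def mult_left_mono)
  finally have "3/4 * (N powr (real s - \<delta>) * N powr (real s - \<nu> + \<delta>)) \<le> real (card G) * N powr (real s - \<nu> + \<delta>)"
    by (simp add: powr_add[symmetric])
  hence "(3/4 * N powr (real s - \<delta>)) * N powr (real s - \<nu> + \<delta>) \<le> real (card G) * N powr (real s - \<nu> + \<delta>)"
    by (simp only: mult.assoc)
  hence c1: "3/4 * N powr (real s - \<delta>) \<le> real (card G)"
    using Npos by (simp only: mult_le_cancel_right_pos powr_gt_zero)
  have c1': "real (card G) > N powr (real s - \<delta>) / 2"
  proof -
    have "N powr (real s - \<delta>) > 0" using Npos by simp
    then show ?thesis using c1 by linarith
  qed
  define Y where "Y = {a\<in>X. F a \<in> F ` G}"
  have "real (card Y) = (\<Sum>a\<in>Y. 1)" by simp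
  also have "\<dots> = (\<Sum>y\<in>F ` G. \<Sum>a\<in>{a\<in>Y. F a = y}. 1)"
  proof -
    have fY: "finite Y" using finX by (simp add: Y_def)
    have sY: "F ` Y \<subseteq> F ` G" by (auto simp: Y_def)
    show ?thesis using sum.group[OF fY finite_imageI[OF finG] sY, of "\<lambda>_. 1::real"] by simp
  qed
  also have "\<dots> = (\<Sum>y\<in>F ` G. real (cnt X F y))"
    by (rule sum.cong) (auto simp: cnt_def Y_def intro!: arg_cong[where f=card])
  also have "\<dots> \<ge> (\<Sum>y\<in>F ` G. T)"
    by (rule sum_mono) (auto simp: G_def)
  finally have "real (card (F ` G)) * T \<le> real (card Y)" by simp
  also have "\<dots> \<le> real (card X)" using card_mono[OF finX, of Y] by (simp add: Y_def)
  finally have "real (card (F ` G)) * T \<le> N powr real s" using cardX by simp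
  hence "real (card (F ` G)) \<le> N powr real s / T" using Tpos by (simp add: field_simps)
  also have "N powr real s / T = 4 * N powr \<nu>"
    using Npos by (simp add: T_def powr_diff field_simps powr_add[symmetric])
  finally have c2: "real (card (F ` G)) \<le> 4 * N powr \<nu>" .
  show ?thesis
    by (rule exI[of _ G]) (use GX c1' c2 in \<open>simp add: X_def N_def tuple_sums_def F_def\<close>)
qed

end
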